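(* Under the same patch setup as below, fix an order $P\ge1$ and $0<r\le1$, and define edge values by the Lagrangian interpolation $$u^I_{n+1}=u^I_1+\sum_{k=1}^{P}\Big(\prod_{\ell=0}^{k-1}(r^2-\ell^2)\Big)\frac{(2k/r)\,\mu\delta^{2k-1}+\delta^{2k}}{(2k)!}\,u^I_1,\qquad u^I_{0}=u^I_n+\sum_{k=1}^{P}\Big(\prod_{\ell=0}^{k-1}(r^2-\ell^2)\Big)\frac{-(2k/r)\,\mu\delta^{2k-1}+\delta^{2k}}{(2k)!}\,u^I_n .$$ Writing these as $u^I_{n+1}=\sum_J\mathcal I^{IJ}_{n1}u^J_1$ and $u^I_0=\sum_J\mathcal I^{IJ}_{1n}u^J_n$, the coefficients are real and satisfy $\mathcal I^{IJ}_{n1}=\mathcal I^{JI}_{1n}$ for all $I,J$; consequently, for every $P$, the linear system $\partial_t\mathbf u=\mathcal L\mathbf u$ of the patch scheme has a real symmetric (self-adjoint) matrix $\mathcal L$.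
   Context: Setup: $N$ patches indexed $I=1,\dots,N$ (indices taken cyclically modulo $N$, macroscale periodic domain), macroscale spacing $H$, each with $n$ interior points of spacing $d$, patch width $h=nd=rH$. Interior values $u^I_i(t)$, $i=1,\dots,n$, satisfy $d^2\partial_t u^I_i=\kappa^I_{i+\frac12}(u^I_{i+1}-u^I_i)+\kappa^I_{i-\frac12}(u^I_{i-1}-u^I_i)$ with real diffusivities satisfying $\kappa^I_{1/2}=\kappa^J_{n+1/2}$ for all $I,J$; $\mathbf u\in\mathbb R^{nN}$ collects all interior values. Operators act on the patch index: $E u^I_i=u^{I+1}_i$, $E^{-1}u^I_i=u^{I-1}_i$; $\mu\delta:=\tfrac12(E-E^{-1})$, $\delta^2:=E-2+E^{-1}$, and for $k\ge1$, $\mu\delta^{2k-1}:=\tfrac12(E-E^{-1})(E-2+E^{-1})^{k-1}$, $\delta^{2k}:=(E-2+E^{-1})^{k}$. *)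

theory Defs
  imports Complex_Main
begin

text \<open>Operators acting on the patch index are represented by N x N real matrices
  A :: nat => nat => real (indices 0..N-1, cyclic), acting as (A u)^I = sum_J A I J u^J.\<close>

definition mmul :: "nat \<Rightarrow> (nat \<Rightarrow> nat \<Rightarrow> real) \<Rightarrow> (nat \<Rightarrow> nat \<Rightarrow> real) \<Rightarrow> (nat \<Rightarrow> nat \<Rightarrow> real)" where
  "mmul N A B = (\<lambda>I J. \<Sum>K<N. A I K * B K J)"

definition mid :: "nat \<Rightarrow> nat \<Rightarrow> real" where
  "mid = (\<lambda>I J. if I = J then 1 else 0)"

fun mpow :: "nat \<Rightarrow> (nat \<Rightarrow> nat \<Rightarrow> real) \<Rightarrow> nat \<Rightarrow> (nat \<Rightarrow> nat \<Rightarrow> real)" where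
  "mpow N A 0 = mid"
| "mpow N A (Suc k) = mmul N (mpow N A k) A"

definition Eop :: "nat \<Rightarrow> nat \<Rightarrow> nat \<Rightarrow> real" where
  "Eop N = (\<lambda>I J. if J = Suc I mod N then 1 else 0)"

definition Einv :: "nat \<Rightarrow> nat \<Rightarrow> nat \<Rightarrow> real" where
  "Einv N = (\<lambda>I J. if I = Suc J mod N then 1 else 0)"

definition delta2 :: "nat \<Rightarrow> nat \<Rightarrow> nat \<Rightarrow> real" where
  "delta2 N = (\<lambda>I J. Eop N I J - 2 * mid I J + Einv N I J)"

text \<open>mu delta^(2k-1) = (1/2)(E - E^{-1}) (E - 2 + E^{-1})^(k-1) and delta^(2k) = (E - 2 + E^{-1})^k.\<close>
definition mudelta_odd :: "nat \<Rightarrow> nat \<Rightarrow> nat \<Rightarrow> nat \<Rightarrow> real" where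
  "mudelta_odd N k = mmul N (\<lambda>I J. (Eop N I J - Einv N I J) / 2) (mpow N (delta2 N) (k - 1))"

definition delta_even :: "nat \<Rightarrow> nat \<Rightarrow> nat \<Rightarrow> nat \<Rightarrow> real" where
  "delta_even N k = mpow N (delta2 N) k"

definition interp_coef :: "real \<Rightarrow> nat \<Rightarrow> real" where
  "interp_coef r k = (\<Prod>l<k. r\<^sup>2 - (real l)\<^sup>2)"

definition In1 :: "nat \<Rightarrow> nat \<Rightarrow> real \<Rightarrow> nat \<Rightarrow> nat \<Rightarrow> real" where
  "In1 N P r = (\<lambda>I J. mid I J + (\<Sum>k\<in>{1..P}. interp_coef r k *
      ((2 * real k / r) * mudelta_odd N k I J + delta_even N k I J) / fact (2 * k)))"

definition I1n :: "nat \<Rightarrow> nat \<Rightarrow> real \<Rightarrow> nat \<Rightarrow> nat \<Rightarrow> real" where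
  "I1n N P r = (\<lambda>I J. mid I J + (\<Sum>k\<in>{1..P}. interp_coef r k *
      (- (2 * real k / r) * mudelta_odd N k I J + delta_even N k I J) / fact (2 * k)))"

text \<open>Patch scheme. u I i = u^I_i (I < N, 1 <= i <= n); kappa I i = kappa^I_{i+1/2} (0 <= i <= n).
  Edge values are given by the interpolation.\<close>
definition uext :: "nat \<Rightarrow> nat \<Rightarrow> real \<Rightarrow> nat \<Rightarrow> (nat \<Rightarrow> nat \<Rightarrow> real) \<Rightarrow> nat \<Rightarrow> nat \<Rightarrow> real" where
  "uext N P r n u I i =
     (if i = 0 then (\<Sum>J<N. I1n N P r I J * u J n)
      else if i = n + 1 then (\<Sum>J<N. In1 N P r I J * u J 1)
      else u I i)"

definition patch_rhs :: "nat \<Rightarrow> nat \<Rightarrow> real \<Rightarrow> nat \<Rightarrow> real \<Rightarrow> (nat \<Rightarrow> nat \<Rightarrow> real)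
    \<Rightarrow> (nat \<Rightarrow> nat \<Rightarrow> real) \<Rightarrow> nat \<Rightarrow> nat \<Rightarrow> real" where
  "patch_rhs N P r n d kappa u I i =
     (kappa I i * (uext N P r n u I (i + 1) - uext N P r n u I i)
      + kappa I (i - 1) * (uext N P r n u I (i - 1) - uext N P r n u I i)) / d\<^sup>2"

definition Lmat :: "nat \<Rightarrow> nat \<Rightarrow> real \<Rightarrow> nat \<Rightarrow> real \<Rightarrow> (nat \<Rightarrow> nat \<Rightarrow> real)
    \<Rightarrow> nat \<times> nat \<Rightarrow> nat \<times> nat \<Rightarrow> real" where
  "Lmat N P r n d kappa = (\<lambda>(I, i) (J, j).
     patch_rhs N P r n d kappa (\<lambda>K k. if K = J \<and> k = j then 1 else 0) I i)"

end

theory Submission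
  imports Defs
begin


lemma mmul_assoc: "mmul N (mmul N A B) C = mmul N A (mmul N B C)"
  unfolding mmul_def
  by (auto simp: sum_distrib_left sum_distrib_right mult.assoc intro!: ext sum.swap)

definition pr :: "nat \<Rightarrow> nat \<Rightarrow> nat" where "pr N I = (I + N - 1) mod N"

lemma pr_lt: "N \<ge> 1 \<Longrightarrow> pr N I < N" by (simp add: pr_def)

lemma suc_mod_iff: "I < N \<Longrightarrow> K < N \<Longrightarrow> (I = Suc K mod N) = (K = pr N I)"
  unfolding pr_def
  by (cases "Suc K = N"; cases "I = 0") (auto simp: mod_if)

lemma suc_mod_inj: "I < N \<Longrightarrow> J < N \<Longrightarrow> (Suc I mod N = Suc J mod N) = (I = J)"
  by (auto simp: mod_if split: if_splits)

lemma suc_pr: "I < N \<Longrightarrow> Suc (pr N I) mod N = I"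
  using suc_mod_iff[of I N "pr N I"] pr_lt[of N I] by auto

lemma sum_d1: "(\<Sum>K<(N::nat). (if K = a then 1 else 0) * (f K::real)) = (if a < N then f a else 0)"
proof -
  have "(\<Sum>K<N. (if K = a then 1 else 0) * (f K::real)) = (\<Sum>K<N. if K = a then f K else 0)"
    by (rule sum.cong) auto
  moreover have "(\<Sum>K<N. if K = a then (f K::real) else 0) = (if a < N then f a else 0)"
    by (induct N) auto
  ultimately show ?thesis by simp
qed
lemma sum_d2: "(\<Sum>K<(N::nat). (f K::real) * (if K = a then 1 else 0)) = (if a < N then f a else 0)"
  using sum_d1[where N=N and a=a and f=f] by (simp add: mult.commute)
lemma sum_d1': "(\<Sum>K<(N::nat). (if a = K then 1 else 0) * (f K::real)) = (if a < N then f a else 0)"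
  using sum_d1[where N=N and a=a and f=f] by (simp add: eq_commute)
lemma sum_d2': "(\<Sum>K<(N::nat). (f K::real) * (if a = K then 1 else 0)) = (if a < N then f a else 0)"
  using sum_d2[where N=N and a=a and f=f] by (simp add: eq_commute)

lemma mmul_E_left: "N \<ge> 1 \<Longrightarrow> mmul N (Eop N) B I J = B (Suc I mod N) J"
  unfolding mmul_def Eop_def by (simp add: sum_d1)

lemma mmul_Einv_left: "I < N \<Longrightarrow> mmul N (Einv N) B I J = B (pr N I) J"
proof -
  assume "I < N"
  then have "mmul N (Einv N) B I J = (\<Sum>K<N. if K = pr N I then B K J else 0)"
    unfolding mmul_def Einv_def by (intro sum.cong) (auto simp: suc_mod_iff)
  also have "\<dots> = B (pr N I) J" using pr_lt[of N I] \<open>I<N\<close> by simp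
  finally show ?thesis .
qed

lemma mmul_E_right: "J < N \<Longrightarrow> mmul N B (Eop N) I J = B I (pr N J)"
proof -
  assume "J < N"
  then have "mmul N B (Eop N) I J = (\<Sum>K<N. if K = pr N J then B I K else 0)"
    unfolding mmul_def Eop_def by (intro sum.cong) (auto simp: suc_mod_iff)
  also have "\<dots> = B I (pr N J)" using pr_lt[of N J] \<open>J<N\<close> by simp
  finally show ?thesis .
qed

lemma mmul_Einv_right: "N \<ge> 1 \<Longrightarrow> mmul N B (Einv N) I J = B I (Suc J mod N)"
  unfolding mmul_def Einv_def by (simp add: sum_d2)

lemma mmul_mid_left: "I < N \<Longrightarrow> mmul N mid B I J = B I J"
  unfolding mmul_def mid_def by (simp add: sum_d1')

lemma mmul_mid_right: "J < N \<Longrightarrow> mmul N B mid I J = B I J"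
  unfolding mmul_def mid_def by (simp add: sum_d2 sum_d2')

lemma mmul_lin_left: "mmul N (\<lambda>I J. X I J - 2 * Y I J + Z I J) W I J
   = mmul N X W I J - 2 * mmul N Y W I J + mmul N Z W I J"
  unfolding mmul_def by (simp add: algebra_simps sum.distrib sum_subtractf sum_distrib_left)

lemma mmul_lin_left2: "mmul N (\<lambda>I J. (X I J - Z I J) / 2) W I J
   = (mmul N X W I J - mmul N Z W I J) / 2"
  unfolding mmul_def by (simp add: left_diff_distrib sum_subtractf flip: sum_divide_distrib)

definition Aop :: "nat \<Rightarrow> nat \<Rightarrow> nat \<Rightarrow> real" where
  "Aop N = (\<lambda>I J. (Eop N I J - Einv N I J) / 2)"

lemma DA_comm: assumes "N \<ge> 1" "I < N" "J < N"
  shows "mmul N (delta2 N) (Aop N) I J = mmul N (Aop N) (delta2 N) I J"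
proof -
  have "mmul N (delta2 N) (Aop N) I J = mmul N (Eop N) (Aop N) I J - 2 * mmul N mid (Aop N) I J
      + mmul N (Einv N) (Aop N) I J"
    unfolding delta2_def by (rule mmul_lin_left)
  also have "\<dots> = Aop N (Suc I mod N) J - 2 * Aop N I J + Aop N (pr N I) J"
    using assms by (simp add: mmul_E_left mmul_Einv_left mmul_mid_left)
  finally have 1: "mmul N (delta2 N) (Aop N) I J = Aop N (Suc I mod N) J - 2 * Aop N I J + Aop N (pr N I) J" .
  have "mmul N (Aop N) (delta2 N) I J = (mmul N (Eop N) (delta2 N) I J - mmul N (Einv N) (delta2 N) I J) / 2"
    unfolding Aop_def by (rule mmul_lin_left2)
  also have "\<dots> = (delta2 N (Suc I mod N) J - delta2 N (pr N I) J) / 2"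
    using assms by (simp add: mmul_E_left mmul_Einv_left)
  finally have 2: "mmul N (Aop N) (delta2 N) I J = (delta2 N (Suc I mod N) J - delta2 N (pr N I) J) / 2" .
  have sI: "Suc I mod N < N" "Suc J mod N < N" "pr N I < N" "pr N J < N" using assms pr_lt by auto
  have e1: "(J = Suc (Suc I mod N) mod N) = (pr N J = Suc I mod N)"
    using suc_mod_iff[OF assms(3) sI(1)] by auto
  have e2: "(I = Suc (Suc J mod N) mod N) = (pr N I = Suc J mod N)"
    using suc_mod_iff[OF assms(2) sI(2)] by auto
  have e3: "(I = Suc J mod N) = (J = pr N I)" using suc_mod_iff[OF assms(2,3)] .
  have e4: "(J = Suc I mod N) = (I = pr N J)" using suc_mod_iff[OF assms(3,2)] .
  have e5: "(Suc I mod N = Suc J mod N) = (I = J)" using suc_mod_inj assms by auto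
  have e6: "Suc (pr N I) mod N = I" "Suc (pr N J) mod N = J" using suc_pr assms by auto
  show ?thesis unfolding 1 2 unfolding Aop_def delta2_def Eop_def Einv_def mid_def
    apply (simp only: e5 e6(1) e3 eq_commute[of "pr N I" J] eq_commute[of "Suc I mod N" J] eq_commute[of J I])
    apply (simp add: algebra_simps)
    done
qed

lemma mmul_cong_N: assumes "\<And>I J. I < N \<Longrightarrow> J < N \<Longrightarrow> A I J = A' I J"
   "\<And>I J. I < N \<Longrightarrow> J < N \<Longrightarrow> B I J = B' I J" "I < N" "J < N"
  shows "mmul N A B I J = mmul N A' B' I J"
  unfolding mmul_def using assms by (intro sum.cong) auto

lemma mpow_comm: assumes "\<And>I J. I < N \<Longrightarrow> J < N \<Longrightarrow> mmul N X Y I J = mmul N Y X I J"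
  shows "I < N \<Longrightarrow> J < N \<Longrightarrow> mmul N (mpow N X m) Y I J = mmul N Y (mpow N X m) I J"
proof (induction m arbitrary: I J)
  case 0
  then show ?case by (simp add: mmul_mid_left mmul_mid_right)
next
  case (Suc m)
  have "mmul N (mpow N X (Suc m)) Y I J = mmul N (mpow N X m) (mmul N X Y) I J"
    by (simp add: mmul_assoc)
  also have "\<dots> = mmul N (mpow N X m) (mmul N Y X) I J"
    using Suc.prems assms by (intro mmul_cong_N[where A="mpow N X m" and A'="mpow N X m" and B="mmul N X Y" and B'="mmul N Y X"]) auto
  also have "\<dots> = mmul N (mmul N (mpow N X m) Y) X I J"
    by (simp add: mmul_assoc)
  also have "\<dots> = mmul N (mmul N Y (mpow N X m)) X I J"
    using Suc by (intro mmul_cong_N[where A="mmul N (mpow N X m) Y" and A'="mmul N Y (mpow N X m)" and B=X and B'=X]) auto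
  also have "\<dots> = mmul N Y (mpow N X (Suc m)) I J"
    by (simp add: mmul_assoc)
  finally show ?case .
qed

lemma delta2_sym: "delta2 N I J = delta2 N J I"
  unfolding delta2_def Eop_def Einv_def mid_def by auto

lemma Aop_anti: "Aop N I J = - Aop N J I"
  unfolding Aop_def Eop_def Einv_def by auto

lemma mpow_sym: assumes "\<And>I J. X I J = X J I"
  shows "I < N \<Longrightarrow> J < N \<Longrightarrow> mpow N X m I J = mpow N X m J I"
proof (induction m arbitrary: I J)
  case 0
  then show ?case by (simp add: mid_def)
next
  case (Suc m)
  have "mpow N X (Suc m) I J = mmul N (mpow N X m) X I J" by simp
  also have "\<dots> = mmul N X (mpow N X m) I J"
    using Suc.prems by (intro mpow_comm) auto
  also have "\<dots> = mmul N (mpow N X m) X J I"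
    unfolding mmul_def using Suc assms by (intro sum.cong) (auto simp: mult.commute)
  finally show ?case by simp
qed

lemma mudelta_anti: assumes "N \<ge> 1" "I < N" "J < N"
  shows "mudelta_odd N k J I = - mudelta_odd N k I J"
proof -
  let ?D = "mpow N (delta2 N) (k - 1)"
  have "mudelta_odd N k J I = mmul N (Aop N) ?D J I"
    unfolding mudelta_odd_def Aop_def by simp
  also have "\<dots> = - mmul N ?D (Aop N) I J"
    unfolding mmul_def sum_negf[symmetric]
  proof (rule sum.cong)
    fix K assume "K \<in> {..<N}"
    then have "?D K I = ?D I K" using assms mpow_sym[of "delta2 N", OF delta2_sym] by auto
    then show "Aop N J K * ?D K I = - (?D I K * Aop N K J)"
      using Aop_anti[of N J K] by simp
  qed simp
  also have "\<dots> = - mmul N (Aop N) ?D I J"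
    using mpow_comm[of N "delta2 N" "Aop N"] DA_comm assms by auto
  also have "\<dots> = - mudelta_odd N k I J"
    unfolding mudelta_odd_def Aop_def by simp
  finally show ?thesis .
qed

lemma delta_even_sym: "I < N \<Longrightarrow> J < N \<Longrightarrow> delta_even N k J I = delta_even N k I J"
  unfolding delta_even_def using mpow_sym[of "delta2 N", OF delta2_sym] by auto

lemma In1_I1n: assumes "N \<ge> 1" "I < N" "J < N"
  shows "In1 N P r I J = I1n N P r J I"
  unfolding In1_def I1n_def using mudelta_anti[OF assms] delta_even_sym[OF assms(2,3)]
  by (auto simp: mid_def intro!: sum.cong)

lemma sumJ1: "J < N \<Longrightarrow> (\<Sum>K<(N::nat). (A K::real) * (if K = J \<and> c = j then 1 else 0)) = (if c = j then A J else 0)"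
  using sum_d2[where N=N and a=J and f=A] by (cases "c = j") auto



definition Pp :: "nat \<Rightarrow> nat \<Rightarrow> real \<Rightarrow> nat \<Rightarrow> nat \<Rightarrow> nat \<Rightarrow> nat \<Rightarrow> nat \<Rightarrow> real" where
  "Pp N P r n I i J j = (if i = n then (if j = 1 then In1 N P r I J else 0)
                   else (if I = J \<and> j = i + 1 then 1 else 0))"
definition Pm :: "nat \<Rightarrow> nat \<Rightarrow> real \<Rightarrow> nat \<Rightarrow> nat \<Rightarrow> nat \<Rightarrow> nat \<Rightarrow> nat \<Rightarrow> real" where
  "Pm N P r n I i J j = (if i = 1 then (if j = n then I1n N P r I J else 0)
                   else (if I = J \<and> j = i - 1 then 1 else 0))"

lemma PpPm:
  assumes "1 \<le> i" "i \<le> n" "1 \<le> j" "j \<le> n" "n \<noteq> 1"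
    and k: "kappa J 0 = kappa I n" and a: "In1 N P r I J = I1n N P r J I"
  shows "kappa I i * Pp N P r n I i J j = kappa J (j - 1) * Pm N P r n J j I i"
proof (cases "i = n")
  case True
  show ?thesis
  proof (cases "j = 1")
    case True
    with \<open>i = n\<close> show ?thesis unfolding Pp_def Pm_def using k a by simp
  next
    case False
    have "n \<noteq> j - 1" using assms(3,4) by arith
    with False \<open>i = n\<close> show ?thesis unfolding Pp_def Pm_def by simp
  qed
next
  case False
  show ?thesis
  proof (cases "j = 1")
    case True
    with False assms(1) show ?thesis unfolding Pp_def Pm_def by simp
  next
    case False2: False
    show ?thesis
    proof (cases "I = J \<and> j = i + 1")
      case True
      with False False2 show ?thesis unfolding Pp_def Pm_def by simp
    next
      case F3: False
      then have "\<not> (J = I \<and> i = j - 1)" using False2 assms(3) by auto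
      with False False2 F3 assms(1,3) show ?thesis unfolding Pp_def Pm_def by auto
    qed
  qed
qed
lemma Lmat_formula:
  assumes "I < N" "J < N" "1 \<le> i" "i \<le> n" "1 \<le> j" "j \<le> n"
  shows "Lmat N P r n d kappa (I, i) (J, j) =
    (kappa I i * ((if i = n then (if j = 1 then In1 N P r I J else 0)
                   else (if I = J \<and> j = i + 1 then 1 else 0)) - (if I = J \<and> j = i then 1 else 0))
   + kappa I (i - 1) * ((if i = 1 then (if j = n then I1n N P r I J else 0)
                   else (if I = J \<and> j = i - 1 then 1 else 0)) - (if I = J \<and> j = i then 1 else 0))) / d\<^sup>2"
proof -
  have p: "uext N P r n (\<lambda>K k. if K = J \<and> k = j then 1 else 0) I (i + 1)
     = (if i = n then (if j = 1 then In1 N P r I J else 0) else (if I = J \<and> j = i + 1 then 1 else 0))"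
    unfolding uext_def using assms sumJ1[of J N "In1 N P r I" 1 j] by auto
  have m: "uext N P r n (\<lambda>K k. if K = J \<and> k = j then 1 else 0) I (i - 1)
     = (if i = 1 then (if j = n then I1n N P r I J else 0) else (if I = J \<and> j = i - 1 then 1 else 0))"
    unfolding uext_def using assms sumJ1[of J N "I1n N P r I" n j] by auto
  have c: "uext N P r n (\<lambda>K k. if K = J \<and> k = j then 1 else 0) I i = (if I = J \<and> j = i then 1 else 0)"
    unfolding uext_def using assms by auto
  show ?thesis unfolding Lmat_def patch_rhs_def by (simp only: split p m c)
qed

theorem lemma2:
  fixes N n P :: nat and r H d :: real and kappa :: "nat \<Rightarrow> nat \<Rightarrow> real"
  assumes "N \<ge> 1" and "n \<ge> 1" and "P \<ge> 1"
    and "0 < r" and "r \<le> 1" and "H > 0" and "d > 0" and "real n * d = r * H"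
    and "\<forall>I<N. \<forall>J<N. kappa I 0 = kappa J n"
  shows "(\<forall>I<N. \<forall>J<N. In1 N P r I J = I1n N P r J I)
    \<and> (\<forall>I<N. \<forall>J<N. \<forall>i\<in>{1..n}. \<forall>j\<in>{1..n}.
          Lmat N P r n d kappa (I, i) (J, j) = Lmat N P r n d kappa (J, j) (I, i))"
  proof
  show A: "\<forall>I<N. \<forall>J<N. In1 N P r I J = I1n N P r J I"
    using In1_I1n assms(1) by auto
  show "\<forall>I<N. \<forall>J<N. \<forall>i\<in>{1..n}. \<forall>j\<in>{1..n}.
          Lmat N P r n d kappa (I, i) (J, j) = Lmat N P r n d kappa (J, j) (I, i)"
  proof (intro allI impI ballI)
    fix I J i j assume IJ: "I < N" "J < N" and ij: "i \<in> {1..n}" "j \<in> {1..n}"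
    have k1: "kappa I 0 = kappa J n" "kappa J 0 = kappa I n" using assms(9) IJ by blast+
    have a1: "In1 N P r I J = I1n N P r J I" "In1 N P r J I = I1n N P r I J" using A IJ by auto
    have i1: "1 \<le> i" "i \<le> n" "1 \<le> j" "j \<le> n" using ij by auto
    define dl where "dl = (\<lambda>(I::nat) (i::nat) J j. (if I = J \<and> j = i then (1::real) else 0))"
    have L1: "Lmat N P r n d kappa (I, i) (J, j) = (kappa I i * (Pp N P r n I i J j - dl I i J j)
          + kappa I (i - 1) * (Pm N P r n I i J j - dl I i J j)) / d\<^sup>2"
      unfolding Lmat_formula[OF IJ i1] Pp_def Pm_def dl_def by simp
    have L2: "Lmat N P r n d kappa (J, j) (I, i) = (kappa J j * (Pp N P r n J j I i - dl J j I i)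
          + kappa J (j - 1) * (Pm N P r n J j I i - dl J j I i)) / d\<^sup>2"
      unfolding Lmat_formula[OF IJ(2,1) i1(3,4,1,2)] Pp_def Pm_def dl_def by simp
    have dsym: "dl J j I i = dl I i J j" unfolding dl_def by auto
    have dk: "kappa J j * dl I i J j = kappa I i * dl I i J j"
      "kappa J (j - 1) * dl I i J j = kappa I (i - 1) * dl I i J j" unfolding dl_def by auto
    show "Lmat N P r n d kappa (I, i) (J, j) = Lmat N P r n d kappa (J, j) (I, i)"
    proof (cases "n = 1")
      case True
      then have "i = 1" "j = 1" using i1 by auto
      then show ?thesis unfolding L1 L2 dsym Pp_def Pm_def using True k1 a1 dk
        by (simp add: algebra_simps)
    next
      case False
      have a: "kappa I i * Pp N P r n I i J j = kappa J (j - 1) * Pm N P r n J j I i"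
        using PpPm[OF i1 False k1(2) a1(1)] .
      have b: "kappa J j * Pp N P r n J j I i = kappa I (i - 1) * Pm N P r n I i J j"
        using PpPm[OF i1(3,4,1,2) False k1(1) a1(2)] .
      have "kappa I i * (Pp N P r n I i J j - dl I i J j)
          + kappa I (i - 1) * (Pm N P r n I i J j - dl I i J j)
          = kappa J j * (Pp N P r n J j I i - dl I i J j)
          + kappa J (j - 1) * (Pm N P r n J j I i - dl I i J j)"
        unfolding right_diff_distrib using a b dk by linarith
      then show ?thesis unfolding L1 L2 dsym by simp
    qed
  qed
qed

end
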